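(* Let $a,b,c,q>0$, $0<p<1$, and consider $$\frac{dx}{dt}=x\left[\frac{(1-x)(x-p)}{1+qy}-ay\right],\qquad \frac{dy}{dt}=by\,(1-y-cx).$$ Define $A_1=ac^2q+1$, $A_2=-(2acq+ac+p+1)$, $A_3=a+aq+p$, $\Delta=A_2^2-4A_1A_3$. When $\Delta>0$ put $x_1=\frac{-A_2-\sqrt\Delta}{2A_1}$, $x_2=\frac{-A_2+\sqrt\Delta}{2A_1}$, $E_{1*}=(x_1,1-cx_1)$, $E_{2*}=(x_2,1-cx_2)$; when $\Delta=0$ put $x_3=-\frac{A_2}{2A_1}$ and $E_{3*}=(x_3,1-cx_3)$. Then the positive equilibria (equilibria with both coordinates positive) of the system are as follows. Case I: $\Delta>0$. (1) If $2A_1+A_2>0$: (a) if $0<c<1$, there are exactly two positive equilibria $E_{1*}$ and $E_{2*}$; (b) if $c=1$, there is exactly one positive equilibrium $E_{1*}$; (c) if $1<c\le \frac1q+1$ and $0<p<\frac1c$, there is exactly one positive equilibrium $E_{1*}$. (2) If $2A_1+A_2<0$, $1<c<\frac1q+1$ and $0<p<\frac1c$, there is exactly one positive equilibrium $E_{1*}$. (3) If $2A_1+A_2=0$, $c>1$ and $0<p<\frac1c$, there is exactly one positive equilibrium $E_{1*}$. Case II: if $\Delta=0$, $2A_1+A_2>0$ and $0<c<1$, there is exactly one positive equilibrium $E_{3*}$.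
   Context: The quadratic $A_1x^2+A_2x+A_3=0$ is obtained by eliminating $y=1-cx$ from the equations $(1-x)(x-p)/(1+qy)-ay=0$ and $1-y-cx=0$; its real roots give the $x$-coordinates of the interior equilibria. *)

theory Defs
  imports Complex_Main
begin

definition fx :: "real \<Rightarrow> real \<Rightarrow> real \<Rightarrow> real \<Rightarrow> real \<Rightarrow> real" where
  "fx a p q x y = x * ((1 - x) * (x - p) / (1 + q * y) - a * y)"

definition fy :: "real \<Rightarrow> real \<Rightarrow> real \<Rightarrow> real \<Rightarrow> real" where
  "fy b c x y = b * y * (1 - y - c * x)"

definition pos_equilibria :: "real \<Rightarrow> real \<Rightarrow> real \<Rightarrow> real \<Rightarrow> real \<Rightarrow> (real \<times> real) set" where
  "pos_equilibria a b c p q =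
     {(x, y). x > 0 \<and> y > 0 \<and> fx a p q x y = 0 \<and> fy b c x y = 0}"

definition A1 :: "real \<Rightarrow> real \<Rightarrow> real \<Rightarrow> real" where
  "A1 a c q = a * c^2 * q + 1"

definition A2 :: "real \<Rightarrow> real \<Rightarrow> real \<Rightarrow> real \<Rightarrow> real" where
  "A2 a c p q = - (2 * a * c * q + a * c + p + 1)"

definition A3 :: "real \<Rightarrow> real \<Rightarrow> real \<Rightarrow> real" where
  "A3 a p q = a + a * q + p"

definition Delta :: "real \<Rightarrow> real \<Rightarrow> real \<Rightarrow> real \<Rightarrow> real" where
  "Delta a c p q = (A2 a c p q)^2 - 4 * A1 a c q * A3 a p q"

definition x1 :: "real \<Rightarrow> real \<Rightarrow> real \<Rightarrow> real \<Rightarrow> real" where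
  "x1 a c p q = (- A2 a c p q - sqrt (Delta a c p q)) / (2 * A1 a c q)"

definition x2 :: "real \<Rightarrow> real \<Rightarrow> real \<Rightarrow> real \<Rightarrow> real" where
  "x2 a c p q = (- A2 a c p q + sqrt (Delta a c p q)) / (2 * A1 a c q)"

definition x3 :: "real \<Rightarrow> real \<Rightarrow> real \<Rightarrow> real \<Rightarrow> real" where
  "x3 a c p q = - A2 a c p q / (2 * A1 a c q)"

definition E1 :: "real \<Rightarrow> real \<Rightarrow> real \<Rightarrow> real \<Rightarrow> real \<times> real" where
  "E1 a c p q = (x1 a c p q, 1 - c * x1 a c p q)"

definition E2 :: "real \<Rightarrow> real \<Rightarrow> real \<Rightarrow> real \<Rightarrow> real \<times> real" where
  "E2 a c p q = (x2 a c p q, 1 - c * x2 a c p q)"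

definition E3 :: "real \<Rightarrow> real \<Rightarrow> real \<Rightarrow> real \<Rightarrow> real \<times> real" where
  "E3 a c p q = (x3 a c p q, 1 - c * x3 a c p q)"

end

theory Submission
  imports Defs
begin

lemma quad_fact:
  fixes A B C D x :: real
  assumes "A > 0" "D = B^2 - 4*A*C" "D \<ge> 0"
  shows "A*x^2 + B*x + C = A * (x - (-B - sqrt D)/(2*A)) * (x - (-B + sqrt D)/(2*A))"
proof -
  have s: "sqrt D ^ 2 = D" using assms by simp
  show ?thesis using assms(1) s unfolding assms(2)
    by (simp add: field_simps power2_eq_square)
qed

lemma set_one:
  assumes "\<And>x y. (x,y) \<in> P \<longleftrightarrow> y = 1 - c*x \<and> x = r"
  shows "P = {(r, 1 - c*r)}"
  using assms by auto

lemma set_two: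
  assumes "\<And>x y. (x,y) \<in> P \<longleftrightarrow> y = 1 - c*x \<and> (x = r \<or> x = s)"
  shows "P = {(r, 1 - c*r), (s, 1 - c*s)}"
  using assms by auto

lemma eq_char:
  assumes "a > 0" "b > 0" "q > 0"
  shows "(x,y) \<in> pos_equilibria a b c p q \<longleftrightarrow>
     x > 0 \<and> y > 0 \<and> y = 1 - c*x \<and> A1 a c q * x^2 + A2 a c p q * x + A3 a p q = 0"
proof -
  { assume xy: "x > 0" "y > 0"
    have qy: "1 + q*y > 0" using assms xy by (simp add: add_pos_pos)
    have "fx a p q x y = 0 \<longleftrightarrow> (1 - x) * (x - p) / (1 + q * y) = a * y"
      using xy unfolding fx_def by simp
    also have "\<dots> \<longleftrightarrow> (1 - x) * (x - p) = a * y * (1 + q*y)"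
      using qy by (simp add: field_simps)
    finally have fx: "fx a p q x y = 0 \<longleftrightarrow> (1 - x) * (x - p) = a * y * (1 + q*y)" .
    have fy: "fy b c x y = 0 \<longleftrightarrow> y = 1 - c*x" using assms xy unfolding fy_def by auto
    have id: "y = 1 - c*x \<Longrightarrow> (1 - x) * (x - p) - a * y * (1 + q*y) =
        - (A1 a c q * x^2 + A2 a c p q * x + A3 a p q)"
      unfolding A1_def A2_def A3_def by (hypsubst, simp add: algebra_simps power2_eq_square)
    have "(fx a p q x y = 0 \<and> fy b c x y = 0) \<longleftrightarrow>
       (y = 1 - c*x \<and> A1 a c q * x^2 + A2 a c p q * x + A3 a p q = 0)"
      unfolding fx fy using id by (smt (verit))
  }
  then show ?thesis unfolding pos_equilibria_def by auto
qed

theorem theorem3p1: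
  fixes a b c p q :: real
  assumes "a > 0" and "b > 0" and "c > 0" and "q > 0" and "0 < p" and "p < 1"
  shows
    "(Delta a c p q > 0 \<longrightarrow>
       ((2 * A1 a c q + A2 a c p q > 0 \<longrightarrow>
           (c < 1 \<longrightarrow> E1 a c p q \<noteq> E2 a c p q \<and>
                      pos_equilibria a b c p q = {E1 a c p q, E2 a c p q}) \<and>
           (c = 1 \<longrightarrow> pos_equilibria a b c p q = {E1 a c p q}) \<and>
           (1 < c \<and> c \<le> 1 / q + 1 \<and> p < 1 / c \<longrightarrow>
              pos_equilibria a b c p q = {E1 a c p q})) \<and>
        (2 * A1 a c q + A2 a c p q < 0 \<and> 1 < c \<and> c < 1 / q + 1 \<and> p < 1 / c \<longrightarrow>
              pos_equilibria a b c p q = {E1 a c p q}) \<and>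
        (2 * A1 a c q + A2 a c p q = 0 \<and> c > 1 \<and> p < 1 / c \<longrightarrow>
              pos_equilibria a b c p q = {E1 a c p q}))) \<and>
     (Delta a c p q = 0 \<and> 2 * A1 a c q + A2 a c p q > 0 \<and> c < 1 \<longrightarrow>
              pos_equilibria a b c p q = {E3 a c p q})"
proof -
  define A where "A = A1 a c q"
  define B where "B = A2 a c p q"
  define C where "C = A3 a p q"
  define D where "D = Delta a c p q"
  define r1 where "r1 = x1 a c p q"
  define r2 where "r2 = x2 a c p q"
  note defs = A_def B_def C_def D_def r1_def r2_def
  have Apos: "A > 0" unfolding A_def A1_def using assms by (simp add: add_pos_pos)
  have "a*c > 0" "2*a*c*q > 0" using assms by simp_all
  then have Bneg: "B < 0" unfolding B_def A2_def using assms by linarith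
  have Cpos: "C > 0" unfolding C_def A3_def using assms by (simp add: add_pos_pos)
  have Ddef: "D = B^2 - 4*A*C" unfolding defs Delta_def by simp
  have r1d: "r1 = (-B - sqrt D)/(2*A)" unfolding defs x1_def by simp
  have r2d: "r2 = (-B + sqrt D)/(2*A)" unfolding defs x2_def by simp
  have f1c: "A*(1/c)^2 + B*(1/c) + C = (1/c - 1)*(1/c - p)"
    unfolding defs A1_def A2_def A3_def using assms
    by (simp add: field_simps power2_eq_square)
  have char: "(x,y) \<in> pos_equilibria a b c p q \<longleftrightarrow>
     y = 1 - c*x \<and> 0 < x \<and> x < 1/c \<and> A*x^2 + B*x + C = 0" for x y
  proof -
    have "(1 - c*x > 0) = (x < 1/c)" using assms by (simp add: field_simps)
    then show ?thesis using eq_char[OF assms(1,2,4), of x y c p] unfolding defs by auto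
  qed
  have gen: "A*x^2 + B*x + C = A*(x - r1)*(x - r2)" if "D \<ge> 0" for x
    unfolding r1d r2d using quad_fact[OF Apos Ddef that] .
  have r1pos: "r1 > 0" if "D \<ge> 0"
  proof -
    have "D < B^2" using Ddef Apos Cpos by simp
    then have "sqrt D < sqrt (B^2)" by (simp only: real_sqrt_less_iff)
    then have "sqrt D < -B" using Bneg by simp
    then show ?thesis unfolding r1d using Apos by (simp add: field_simps)
  qed
  have r12: "r1 \<le> r2" if "D \<ge> 0" unfolding r1d r2d using Apos real_sqrt_ge_zero[OF that]
    by (intro divide_right_mono) auto
  have r12s: "r1 < r2" if "D > 0" unfolding r1d r2d using Apos that
    by (intro divide_strict_right_mono) auto
  have sum: "r1 + r2 = -B/A" unfolding r1d r2d using Apos by (simp add: field_simps)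
  have rootiff: "A*x^2 + B*x + C = 0 \<longleftrightarrow> x = r1 \<or> x = r2" if "D \<ge> 0" for x
    using gen[OF that, of x] Apos by simp
  have at1c: "A*(1/c - r1)*(1/c - r2) = (1/c - 1)*(1/c - p)" if "D \<ge> 0"
    using gen[OF that, of "1/c"] f1c by simp
  have charR: "(x,y) \<in> pos_equilibria a b c p q \<longleftrightarrow>
     y = 1 - c*x \<and> 0 < x \<and> x < 1/c \<and> (x = r1 \<or> x = r2)" if "D \<ge> 0" for x y
    using char[of x y] rootiff[OF that, of x] by simp
  have neg_case: "pos_equilibria a b c p q = {E1 a c p q}"
    if D0: "D > 0" and c1: "c > 1" and pc: "p < 1/c"
  proof -
    have "1/c < 1" using c1 by simp
    then have "(1/c - 1)*(1/c - p) < 0" using pc by (simp add: mult_less_0_iff)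
    moreover have "A*((1/c - r1)*(1/c - r2)) = (1/c - 1)*(1/c - p)"
      using at1c D0 by (simp add: mult.assoc)
    ultimately have "(1/c - r1)*(1/c - r2) < 0"
      using mult_nonneg_nonneg[of A "(1/c - r1)*(1/c - r2)"] Apos by linarith
    then have lt: "r1 < 1/c" "1/c < r2" using r12 D0 by (auto simp: mult_less_0_iff)
    have "(x,y) \<in> pos_equilibria a b c p q \<longleftrightarrow> y = 1 - c*x \<and> x = r1" for x y
      using charR[of x y] D0 lt r1pos[of] by auto
    then show ?thesis unfolding E1_def r1_def[symmetric] by (rule set_one)
  qed
  have part1: "Delta a c p q > 0 \<longrightarrow> 2 * A1 a c q + A2 a c p q > 0 \<longrightarrow>
           (c < 1 \<longrightarrow> E1 a c p q \<noteq> E2 a c p q \<and>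
                      pos_equilibria a b c p q = {E1 a c p q, E2 a c p q}) \<and>
           (c = 1 \<longrightarrow> pos_equilibria a b c p q = {E1 a c p q}) \<and>
           (1 < c \<and> c \<le> 1 / q + 1 \<and> p < 1 / c \<longrightarrow>
              pos_equilibria a b c p q = {E1 a c p q})"
  proof (intro impI conjI)
    assume D0': "Delta a c p q > 0" and v: "2 * A1 a c q + A2 a c p q > 0"
    have D0: "D > 0" using D0' D_def by simp
    have "A*(r1+r2) < A*2" using v sum Apos unfolding A_def[symmetric] B_def[symmetric]
      by (simp add: field_simps)
    then have s2: "r1 + r2 < 2" using Apos mult_less_cancel_left_pos by blast
    { assume c1: "c < 1"
      show "E1 a c p q \<noteq> E2 a c p q" using r12s[OF D0] unfolding E1_def E2_def defs by auto
      have "1 < 1/c" using c1 assms by simp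
      then have "(1/c - 1)*(1/c - p) > 0" using assms by (intro mult_pos_pos) linarith+
      moreover have "A*((1/c - r1)*(1/c - r2)) = (1/c - 1)*(1/c - p)"
        using at1c D0 by (simp add: mult.assoc)
      ultimately have "(1/c - r1)*(1/c - r2) > 0"
        using mult_nonneg_nonpos[of A "(1/c - r1)*(1/c - r2)"] Apos by linarith
      moreover have "\<not> (r1 > 1/c \<and> r2 > 1/c)" using s2 \<open>1 < 1/c\<close> by linarith
      ultimately have lt: "r2 < 1/c" using r12 D0 by (auto simp: zero_less_mult_iff)
      then show "pos_equilibria a b c p q = {E1 a c p q, E2 a c p q}"
      proof -
        have "(x,y) \<in> pos_equilibria a b c p q \<longleftrightarrow> y = 1 - c*x \<and> (x = r1 \<or> x = r2)" for x y
          using charR[of x y] D0 lt r12[of] r1pos[of] by auto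
        then show ?thesis unfolding E1_def E2_def r1_def[symmetric] r2_def[symmetric] by (rule set_two)
      qed
    }
    { assume c1: "c = 1"
      have "(1 - r1)*(1 - r2) = 0" using at1c D0 Apos c1 by simp
      then have "r1 = 1 \<or> r2 = 1" by simp
      then have lt: "r1 < 1" "r2 = 1" using s2 r12s[OF D0] by auto
      have "(x,y) \<in> pos_equilibria a b c p q \<longleftrightarrow> y = 1 - c*x \<and> x = r1" for x y
        using charR[of x y] D0 lt r1pos[of] c1 by auto
      then show "pos_equilibria a b c p q = {E1 a c p q}" unfolding E1_def r1_def[symmetric] by (rule set_one)
    }
    { assume "1 < c \<and> c \<le> 1 / q + 1 \<and> p < 1 / c"
      then show "pos_equilibria a b c p q = {E1 a c p q}" using neg_case D0 by auto
    }
  qed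
  have part2: "Delta a c p q = 0 \<and> 2 * A1 a c q + A2 a c p q > 0 \<and> c < 1 \<longrightarrow>
              pos_equilibria a b c p q = {E3 a c p q}"
  proof
    assume h: "Delta a c p q = 0 \<and> 2 * A1 a c q + A2 a c p q > 0 \<and> c < 1"
    have D0: "D = 0" using h D_def by simp
    have e: "r1 = x3 a c p q" "r2 = x3 a c p q" unfolding r1d r2d D0 x3_def defs by auto
    have "A*(r1+r2) < A*2" using h sum Apos unfolding A_def[symmetric] B_def[symmetric]
      by (simp add: field_simps)
    then have s2: "r1 + r2 < 2" using Apos mult_less_cancel_left_pos by blast
    have "1 < 1/c" using h assms by simp
    then have lt: "x3 a c p q < 1/c" using s2 e by simp
    have "(x,y) \<in> pos_equilibria a b c p q \<longleftrightarrow> y = 1 - c*x \<and> x = x3 a c p q" for x y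
      using charR[of x y] D0 lt r1pos[of] e by auto
    then show "pos_equilibria a b c p q = {E3 a c p q}" unfolding E3_def by (rule set_one)
  qed
  show ?thesis using part1 part2 neg_case unfolding D_def by auto
qed

end
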